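(* Let $X$ be a compact metric space with more than one point, and let $\Delta:\mathrm{C}(X)^+\setminus\{0\}\to(0,+\infty)$ be an order-preserving map. For every finite set $\mathcal F\subseteq\mathrm{C}(X)$, every $\varepsilon>0$ and every $M\in\mathbb N$, there exist a finite set $\mathcal H\subseteq\mathrm{C}(X)^+\setminus\{0\}$ with $\mathrm{supp}(h)\neq X$ for each $h\in\mathcal H$, and $L\in\mathbb N$, with the following property. If $n>L$ and $\theta:\mathrm{C}(X)\to\mathrm{M}_n(\mathbb C)$ is a unital point-evaluation map with $\mathrm{tr}(\theta(h))>\Delta(h)$ for all $h\in\mathcal H$, then there are integers $n_0,n_1\ge0$ with $n_0+Mn_1=n$ and $n_0\le n_1$, unital point-evaluation maps $\theta_0:\mathrm{C}(X)\to\mathrm{M}_{n_0}(\mathbb C)$ and $\theta_1:\mathrm{C}(X)\to\mathrm{M}_{n_1}(\mathbb C)$ (with $\theta_0=0$ if $n_0=0$), and a permutation unitary $u\in\mathrm{M}_n(\mathbb C)$ such that $$\|\theta(a)-u^*(\theta_0(a)\oplus\underbrace{\theta_1(a)\oplus\cdots\oplus\theta_1(a)}_{M})u\|<\varepsilon,\quad a\in\mathcal F.$$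
   Context: A unital point-evaluation map $\theta:\mathrm{C}(X)\to\mathrm{M}_n(\mathbb C)$ is one of the form $\theta(f)=\mathrm{diag}(f(x_1),\dots,f(x_n))$ for some $x_1,\dots,x_n\in X$. $\mathrm{tr}$ denotes the normalized trace on $\mathrm{M}_n(\mathbb C)$. *)

theory Defs
  imports "HOL-Analysis.Analysis" "Jordan_Normal_Form.Schur_Decomposition"
begin

definition Cfun :: "('a::topological_space \<Rightarrow> complex) set" where
  "Cfun = {f. continuous_on UNIV f}"

text \<open>Positive cone of C(X): pointwise nonnegative (complex order: real and nonnegative).\<close>
definition Cpos :: "('a::topological_space \<Rightarrow> complex) set" where
  "Cpos = {f \<in> Cfun. \<forall>x. 0 \<le> f x}"

definition supp :: "('a::topological_space \<Rightarrow> complex) \<Rightarrow> 'a set" where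
  "supp h = closure {x. h x \<noteq> 0}"

definition point_eval :: "nat \<Rightarrow> (('a::topological_space \<Rightarrow> complex) \<Rightarrow> complex mat) \<Rightarrow> bool" where
  "point_eval n \<theta> \<longleftrightarrow> (\<exists>xs. length xs = n \<and>
      (\<forall>f\<in>Cfun. \<theta> f = mat_diag n (\<lambda>i. f (xs ! i))))"

definition ntr :: "complex mat \<Rightarrow> complex" where
  "ntr A = (\<Sum>i<dim_row A. A $$ (i,i)) / of_nat (dim_row A)"

definition vnorm :: "complex vec \<Rightarrow> real" where
  "vnorm v = sqrt (\<Sum>i<dim_vec v. (cmod (v $ i))\<^sup>2)"

definition opnorm :: "complex mat \<Rightarrow> real" where
  "opnorm A = Sup {vnorm (A *\<^sub>v v) | v. v \<in> carrier_vec (dim_col A) \<and> vnorm v \<le> 1}"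

definition dsum :: "complex mat \<Rightarrow> complex mat \<Rightarrow> complex mat" where
  "dsum A B = four_block_mat A (0\<^sub>m (dim_row A) (dim_col B)) (0\<^sub>m (dim_row B) (dim_col A)) B"

fun dsum_pow :: "nat \<Rightarrow> complex mat \<Rightarrow> complex mat" where
  "dsum_pow 0 B = 0\<^sub>m 0 0"
| "dsum_pow (Suc m) B = dsum B (dsum_pow m B)"

definition perm_unitary :: "nat \<Rightarrow> complex mat \<Rightarrow> bool" where
  "perm_unitary n u \<longleftrightarrow> (\<exists>\<sigma>. \<sigma> permutes {..<n} \<and>
      u = mat n n (\<lambda>(i,j). if j = \<sigma> i then 1 else 0))"

end

theory Submission
  imports Defs
begin


lemma mat_diag_cong: "(\<And>i. i < n \<Longrightarrow> f i = g i) \<Longrightarrow> mat_diag n f = mat_diag n g"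
  unfolding mat_diag_def by (rule eq_matI) auto

lemma dsum_diag: "dsum (mat_diag a f) (mat_diag b g) = mat_diag (a+b) (\<lambda>i. if i<a then f i else g (i-a))"
  unfolding dsum_def mat_diag_def apply (rule eq_matI) 
  apply (auto)[1]
  apply (simp only: dim_row_mat four_block_mat_def Let_def)
  apply (simp only: dim_col_mat four_block_mat_def Let_def)
  done

lemma dsum_pow_diag: "dsum_pow M (mat_diag m f) = mat_diag (M*m) (\<lambda>i. f (i mod m))"
proof (induction M)
  case 0
  then show ?case unfolding mat_diag_def by (auto intro!: eq_matI)
next
  case (Suc M)
  show ?case unfolding dsum_pow.simps Suc dsum_diag mult_Suc
    by (rule mat_diag_cong) (auto simp: le_mod_geq)
qed

lemma concat_rep_nth: "i < M * length ws \<Longrightarrow> concat (replicate M ws) ! i = ws ! (i mod length ws)"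
proof (induction M arbitrary: i)
  case 0 then show ?case by simp
next
  case (Suc M)
  show ?case
  proof (cases "i < length ws")
    case True then show ?thesis by (simp add: nth_append)
  next
    case False
    then show ?thesis using Suc by (simp add: nth_append le_mod_geq)
  qed
qed

lemma diag_sub: "mat_diag n (f::nat\<Rightarrow>complex) - mat_diag n g = mat_diag n (\<lambda>i. f i - g i)"
  unfolding mat_diag_def by (rule eq_matI) auto

lemma adj_index: "i < dim_col u \<Longrightarrow> j < dim_row u \<Longrightarrow> mat_adjoint u $$ (i,j) = conjugate (u $$ (j,i))"
  unfolding mat_adjoint_def mat_of_rows_def by auto

lemma adj_dim: "dim_row (mat_adjoint u) = dim_col u" "dim_col (mat_adjoint u) = dim_row u"
  unfolding mat_adjoint_def by auto

lemma perm_conj: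
  assumes s: "sg permutes {..<n}"
    and u: "u = mat n n (\<lambda>(i,j). if j = sg i then 1 else 0)"
  shows "mat_adjoint u * mat_diag n (d::nat\<Rightarrow>complex) * u = mat_diag n (\<lambda>i. d (Hilbert_Choice.inv sg i))"
proof -
  have A: "mat_adjoint u * mat_diag n d = mat n n (\<lambda>(i,j). (if i = sg j then 1 else 0) * d j)"
    by (subst mat_diag_mult_right[of _ n n]) (auto simp: adj_dim u adj_index intro!: eq_matI)
  show ?thesis
  proof (rule eq_matI)
    fix i j assume i: "i < dim_row (mat_diag n (\<lambda>i. d (Hilbert_Choice.inv sg i)))" and j: "j < dim_col (mat_diag n (\<lambda>i. d (Hilbert_Choice.inv sg i)))"
    then have i: "i < n" and j: "j < n" by (auto simp: mat_diag_def)
    have "(mat_adjoint u * mat_diag n d * u) $$ (i,j) = (\<Sum>k<n. (if i = sg k then 1 else 0) * d k * (if j = sg k then 1 else 0))"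
      unfolding A using i j by (auto simp: u scalar_prod_def lessThan_atLeast0 intro!: sum.cong)
    also have "\<dots> = (\<Sum>k<n. if k = Hilbert_Choice.inv sg i then d k * (if j = i then 1 else 0) else 0)"
      apply (rule sum.cong, simp)
      using s by (auto simp: permutes_inverses(1) permutes_inverses(2))
    also have "\<dots> = d (Hilbert_Choice.inv sg i) * (if j = i then 1 else 0)"
    proof -
      have "Hilbert_Choice.inv sg i < n" using permutes_in_image[OF permutes_inv[OF s]] i by simp
      then show ?thesis by simp
    qed
    finally show "(mat_adjoint u * mat_diag n d * u) $$ (i,j) = mat_diag n (\<lambda>i. d (Hilbert_Choice.inv sg i)) $$ (i,j)"
      using i j by (auto simp: mat_diag_def)
  qed (auto simp: u adj_dim mat_diag_def)
qed



lemma diag_mult_vec_index: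
  assumes "v \<in> carrier_vec n" "i < n"
  shows "(mat_diag n d *\<^sub>v v) $ i = (d i :: complex) * v $ i"
proof -
  have "(mat_diag n d *\<^sub>v v) $ i = (\<Sum>j<n. (if i = j then d j else 0) * v $ j)"
    using assms by (simp add: mat_diag_def mult_mat_vec_def scalar_prod_def lessThan_atLeast0)
  also have "\<dots> = d i * v $ i" 
  proof -
    have "(\<Sum>j<n. (if i = j then d j else 0) * v $ j) = (\<Sum>j<n. if j = i then d j * v $ j else 0)"
      by (rule sum.cong) auto
    then show ?thesis using assms(2) by simp
  qed
  finally show ?thesis .
qed

lemma opnorm_diag:
  assumes c: "c \<ge> 0" and d: "\<And>i. i < n \<Longrightarrow> cmod (d i) \<le> c"
  shows "opnorm (mat_diag n d) \<le> c"
  unfolding opnorm_def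
proof (rule cSup_least)
  have "0\<^sub>v n \<in> carrier_vec n" by simp
  moreover have "vnorm (0\<^sub>v n) \<le> 1" by (simp add: vnorm_def)
  ultimately show "{vnorm (mat_diag n d *\<^sub>v v) |v. v \<in> carrier_vec (dim_col (mat_diag n d)) \<and> vnorm v \<le> 1} \<noteq> {}"
    unfolding mat_diag_def by (simp, blast)
next
  fix x assume "x \<in> {vnorm (mat_diag n d *\<^sub>v v) |v. v \<in> carrier_vec (dim_col (mat_diag n d)) \<and> vnorm v \<le> 1}"
  then obtain v where v: "v \<in> carrier_vec n" "vnorm v \<le> 1" and x: "x = vnorm (mat_diag n d *\<^sub>v v)"
    by (auto simp: mat_diag_def)
  have dv: "dim_vec v = n" using v by simp
  have dimmv: "dim_vec (mat_diag n d *\<^sub>v v) = n" by (simp add: mat_diag_def)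
  have "x = sqrt (\<Sum>i<n. (cmod ((mat_diag n d *\<^sub>v v) $ i))\<^sup>2)"
    unfolding x vnorm_def dimmv ..
  also have "\<dots> = sqrt (\<Sum>i<n. (cmod (d i * v $ i))\<^sup>2)"
    by (rule arg_cong[where f=sqrt], rule sum.cong) (auto simp: diag_mult_vec_index[OF v(1)])
  also have "\<dots> \<le> sqrt (\<Sum>i<n. c\<^sup>2 * (cmod (v $ i))\<^sup>2)"
  proof (rule real_sqrt_le_mono, rule sum_mono)
    fix i assume "i \<in> {..<n}"
    then have "cmod (d i) \<le> c" using d by simp
    then have "(cmod (d i))\<^sup>2 \<le> c\<^sup>2" by (simp add: power_mono)
    then show "(cmod (d i * v $ i))\<^sup>2 \<le> c\<^sup>2 * (cmod (v $ i))\<^sup>2"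
      by (simp add: norm_mult power_mult_distrib mult_right_mono)
  qed
  also have "\<dots> = c * vnorm v"
    unfolding vnorm_def dv by (simp add: sum_distrib_left[symmetric] real_sqrt_mult c)
  also have "\<dots> \<le> c" using v c by (simp add: mult_left_le)
  finally show "x \<le> c" .
qed



lemma count_concat_rep:
  assumes "\<forall>c\<in>set cs. key (rep c) = c"
  shows "count (mset (map key (concat (map (\<lambda>c. replicate (f c) (rep c)) cs)))) x
     = sum_list (map (\<lambda>c. if c = x then f c else (0::nat)) cs)"
  using assms by (induction cs) auto

lemma sum_list_delta_distinct:
  "distinct cs \<Longrightarrow> sum_list (map (\<lambda>c. if c = x then f c else (0::nat)) cs) = (if x \<in> set cs then f x else 0)"
  by (induction cs) auto

lemma count_concat_replicate:
  "count (mset (map key (concat (replicate M ws)))) x = M * count (mset (map key ws)) x"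
  by (induction M) auto

lemma length_concat_rep:
  "length (concat (map (\<lambda>c. replicate (f c) (r c)) cs)) = sum_list (map f cs)"
  by (induction cs) auto

lemma length_concat_replicate: "length (concat (replicate M ws)) = M * length ws"
  by (induction M) auto

lemma regroup:
  fixes key :: "'a \<Rightarrow> 'k" and xs :: "'a list"
  assumes fin: "finite (range key)" and M: "M \<ge> 1"
    and big: "length xs > card (range key) * M * M + card (range key) * M"
  shows "\<exists>zs ws p. p permutes {..<length xs} \<and> length zs + M * length ws = length xs
     \<and> length zs \<le> length ws \<and> (\<forall>i<length xs. key ((zs @ concat (replicate M ws)) ! p i) = key (xs ! i))"
proof -
  define C where "C = range key"
  define k where "k = card C"
  define K where "K = mset (map key xs)"
  have "\<exists>cs. set cs = C \<and> distinct cs" using finite_distinct_list[OF fin] unfolding C_def .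
  then obtain cs where cs: "set cs = C" "distinct cs" by (elim exE conjE)
  define rep where "rep c = (SOME x. key x = c)" for c
  have rep: "\<forall>c\<in>set cs. key (rep c) = c"
  proof
    fix c assume "c \<in> set cs"
    then have "\<exists>x. key x = c" unfolding cs C_def by (simp add: image_iff eq_commute)
    then show "key (rep c) = c" unfolding rep_def by (rule someI_ex)
  qed
  define zs where "zs = concat (map (\<lambda>c. replicate (count K c mod M) (rep c)) cs)"
  define ws where "ws = concat (map (\<lambda>c. replicate (count K c div M) (rep c)) cs)"
  define ys where "ys = zs @ concat (replicate M ws)"
  have KC: "count K x = 0" if "x \<notin> C" for x
    using that unfolding K_def C_def by (auto simp: count_eq_zero_iff)
  have ms: "mset (map key ys) = K"
  proof (rule multiset_eqI)
    fix x
    have "count (mset (map key ys)) x = (if x \<in> set cs then count K x mod M else 0)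
        + M * (if x \<in> set cs then count K x div M else 0)"
      unfolding ys_def map_append mset_append count_union count_concat_replicate
      unfolding zs_def ws_def count_concat_rep[where key=key and rep=rep and cs=cs, OF rep] sum_list_delta_distinct[OF cs(2)] by (rule refl)
    also have "\<dots> = count K x" using KC cs(1) by auto
    finally show "count (mset (map key ys)) x = count K x" .
  qed
  have lys: "length ys = length xs"
    using arg_cong[OF ms, of size] unfolding K_def by simp
  obtain p where p: "p permutes {..<length (map key ys)}" "permute_list p (map key ys) = map key xs"
  proof -
    have ms': "mset (map key xs) = mset (map key ys)" using ms unfolding K_def by simp
    show ?thesis using mset_eq_permutation[OF ms'] that by blast
  qed
  have pk: "\<forall>i<length xs. key (ys ! p i) = key (xs ! i)"
  proof (intro allI impI)
    fix i assume i: "i < length xs"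
    have "key (xs ! i) = map key xs ! i" using i by simp
    also have "\<dots> = permute_list p (map key ys) ! i" using p(2) by simp
    also have "\<dots> = map key ys ! p i" using permute_list_nth[OF p(1)] i lys by simp
    also have "\<dots> = key (ys ! p i)" using permutes_in_image[OF p(1)] i lys by simp
    finally show "key (ys ! p i) = key (xs ! i)" by simp
  qed
  have lsum: "length zs + M * length ws = length xs" using lys unfolding ys_def by (simp add: length_concat_replicate)
  have lk: "length cs = k" using cs distinct_card unfolding k_def by fastforce
  have "length zs = sum_list (map (\<lambda>c. count K c mod M) cs)"
    unfolding zs_def by (rule length_concat_rep)
  also have "\<dots> \<le> sum_list (map (\<lambda>c. M) cs)"
    by (rule sum_list_mono) (use M in auto)
  also have "\<dots> = k * M" using lk by (simp add: sum_list_triv)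
  finally have z: "length zs \<le> k * M" .
  have big': "length xs > k * M * M + k * M" using big unfolding k_def C_def .
  have e: "k * M * M = M * (k * M)" by (simp only: ac_simps)
  have "M * length ws > k * M * M" using lsum z big' by linarith
  then have "M * length ws > M * (k * M)" unfolding e .
  then have "length ws > k * M" by simp
  then have "length zs \<le> length ws" using z by simp
  moreover have "p permutes {..<length xs}" using p(1) lys by simp
  ultimately show ?thesis using lsum pk unfolding ys_def by blast
qed



definition cellkey :: "real \<Rightarrow> (('a \<Rightarrow> complex) list) \<Rightarrow> 'a \<Rightarrow> (int \<times> int) list" where
  "cellkey d Fl x = map (\<lambda>a. (\<lfloor>Re (a x) / d\<rfloor>, \<lfloor>Im (a x) / d\<rfloor>)) Fl"

lemma floor_close:
  fixes s t d :: real
  assumes d: "d > 0" and e: "\<lfloor>s / d\<rfloor> = \<lfloor>t / d\<rfloor>"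
  shows "\<bar>s - t\<bar> < d"
proof -
  have e': "real_of_int \<lfloor>s / d\<rfloor> = real_of_int \<lfloor>t / d\<rfloor>" using e by simp
  have a1: "real_of_int \<lfloor>s / d\<rfloor> \<le> s / d" "s / d < real_of_int \<lfloor>s / d\<rfloor> + 1"
    using floor_correct[of "s/d"] by auto
  have a2: "real_of_int \<lfloor>t / d\<rfloor> \<le> t / d" "t / d < real_of_int \<lfloor>t / d\<rfloor> + 1"
    using floor_correct[of "t/d"] by auto
  have "\<bar>s / d - t / d\<bar> < 1" unfolding abs_less_iff using a1 a2 e' by linarith
  then have "\<bar>(s - t) / d\<bar> < 1" by (simp add: diff_divide_distrib)
  then have "\<bar>s - t\<bar> / d < 1" using d by simp
  then show ?thesis using d by (simp add: divide_less_eq)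
qed

lemma cellkey_close:
  assumes d: "d > 0" and k: "cellkey d Fl x = cellkey d Fl y" and a: "a \<in> set Fl"
  shows "cmod (a x - a y) < 2 * d"
proof -
  have "(\<lfloor>Re (a x) / d\<rfloor>, \<lfloor>Im (a x) / d\<rfloor>) = (\<lfloor>Re (a y) / d\<rfloor>, \<lfloor>Im (a y) / d\<rfloor>)"
    using k a unfolding cellkey_def map_eq_conv by simp
  then have r: "\<bar>Re (a x) - Re (a y)\<bar> < d" and i: "\<bar>Im (a x) - Im (a y)\<bar> < d"
    using floor_close[OF d] by auto
  have "cmod (a x - a y) \<le> \<bar>Re (a x - a y)\<bar> + \<bar>Im (a x - a y)\<bar>" by (rule cmod_le)
  also have "\<dots> < 2 * d" using r i by simp
  finally show ?thesis .
qed

lemma floor_range: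
  assumes d: "d > 0" and b: "\<And>x. \<bar>g x\<bar> \<le> B"
  shows "range (\<lambda>x. \<lfloor>g x / d\<rfloor>) \<subseteq> {\<lfloor>- B / d\<rfloor>..\<lfloor>B / d\<rfloor>}"
proof
  fix z assume "z \<in> range (\<lambda>x. \<lfloor>g x / d\<rfloor>)"
  then obtain x where z: "z = \<lfloor>g x / d\<rfloor>" by auto
  have "- B \<le> g x" "g x \<le> B" using b[of x] by auto
  then have "- (B / d) \<le> g x / d" "g x / d \<le> B / d"
    using d divide_right_mono[of "-B" "g x" d] divide_right_mono[of "g x" B d] by auto
  then show "z \<in> {\<lfloor>- B / d\<rfloor>..\<lfloor>B / d\<rfloor>}" unfolding z by (simp add: floor_mono)
qed

lemma cellkey_finite:
  fixes Fl :: "('a::metric_space \<Rightarrow> complex) list"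
  assumes comp: "compact (UNIV :: 'a set)" and d: "d > 0" and F: "set Fl \<subseteq> Cfun"
  shows "finite (range (cellkey d Fl))"
proof -
  have fa: "finite (range (\<lambda>x. (\<lfloor>Re (a x) / d\<rfloor>, \<lfloor>Im (a x) / d\<rfloor>)))" if a: "a \<in> set Fl" for a
  proof -
    have "continuous_on UNIV a" using a F unfolding Cfun_def by auto
    then have "compact (a ` UNIV)" using comp by (rule compact_continuous_image)
    then have "bounded (a ` UNIV)" by (rule compact_imp_bounded)
    then obtain B where B: "\<And>x. cmod (a x) \<le> B" unfolding bounded_iff by auto
    have bre: "\<bar>Re (a x)\<bar> \<le> B" for x using abs_Re_le_cmod[of "a x"] B[of x] by linarith
    have bim: "\<bar>Im (a x)\<bar> \<le> B" for x using abs_Im_le_cmod[of "a x"] B[of x] by linarith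
    have "range (\<lambda>x. (\<lfloor>Re (a x) / d\<rfloor>, \<lfloor>Im (a x) / d\<rfloor>)) \<subseteq>
       range (\<lambda>x. \<lfloor>Re (a x) / d\<rfloor>) \<times> range (\<lambda>x. \<lfloor>Im (a x) / d\<rfloor>)" by auto
    also have "\<dots> \<subseteq> {\<lfloor>- B / d\<rfloor>..\<lfloor>B / d\<rfloor>} \<times> {\<lfloor>- B / d\<rfloor>..\<lfloor>B / d\<rfloor>}"
      using floor_range[OF d bre] floor_range[OF d bim] by (rule Sigma_mono)
    finally show ?thesis by (rule finite_subset) simp
  qed
  define T where "T = (\<Union>a\<in>set Fl. range (\<lambda>x. (\<lfloor>Re (a x) / d\<rfloor>, \<lfloor>Im (a x) / d\<rfloor>)))"
  have fT: "finite T" unfolding T_def using fa by simp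
  have "range (cellkey d Fl) \<subseteq> {ks. set ks \<subseteq> T \<and> length ks = length Fl}"
  proof (rule subsetI)
    fix ks assume "ks \<in> range (cellkey d Fl)"
    then obtain x where ks: "ks = cellkey d Fl x" by auto
    have "set ks \<subseteq> T"
    proof
      fix z assume "z \<in> set ks"
      then obtain a where a: "a \<in> set Fl" and z: "z = (\<lfloor>Re (a x) / d\<rfloor>, \<lfloor>Im (a x) / d\<rfloor>)"
        unfolding ks cellkey_def by auto
      show "z \<in> T" unfolding T_def z using a by (intro UN_I[of a]) auto
    qed
    then show "ks \<in> {ks. set ks \<subseteq> T \<and> length ks = length Fl}" unfolding ks cellkey_def by simp
  qed
  moreover have "finite {ks. set ks \<subseteq> T \<and> length ks = length Fl}"
    by (rule finite_lists_length_eq[OF fT])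
  ultimately show ?thesis by (rule finite_subset)
qed



theorem lemma7p7:
  fixes \<Delta> :: "('a::metric_space \<Rightarrow> complex) \<Rightarrow> real"
  assumes compact: "compact (UNIV :: 'a set)"
    and nontriv: "\<exists>x y :: 'a. x \<noteq> y"
    and Delta_pos: "\<forall>h \<in> Cpos - {\<lambda>_. 0}. \<Delta> h > 0"
    and Delta_mono: "\<forall>f \<in> Cpos - {\<lambda>_. 0}. \<forall>g \<in> Cpos - {\<lambda>_. 0}. (\<forall>x. f x \<le> g x) \<longrightarrow> \<Delta> f \<le> \<Delta> g"
    and F: "finite \<F>" "\<F> \<subseteq> Cfun"
    and eps: "(\<epsilon>::real) > 0"
  shows "\<exists>\<H> (L::nat). finite \<H> \<and> \<H> \<subseteq> Cpos - {\<lambda>_. 0} \<and> (\<forall>h\<in>\<H>. supp h \<noteq> UNIV) \<and>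
     (\<forall>n \<theta>. n > L \<and> point_eval n \<theta> \<and> (\<forall>h\<in>\<H>. ntr (\<theta> h) > complex_of_real (\<Delta> h)) \<longrightarrow>
        (\<exists>n0 n1 \<theta>0 \<theta>1 u. n0 + M * n1 = n \<and> n0 \<le> n1 \<and>
           point_eval n0 \<theta>0 \<and> point_eval n1 \<theta>1 \<and> perm_unitary n u \<and>
           (\<forall>a\<in>\<F>. opnorm (\<theta> a - mat_adjoint u * dsum (\<theta>0 a) (dsum_pow M (\<theta>1 a)) * u) < \<epsilon>)))"
proof -
  from finite_list[OF F(1)] obtain Fl where Fl: "set Fl = \<F>" ..
  define d where "d = \<epsilon> / 4"
  have d: "d > 0" using eps unfolding d_def by simp
  define key where "key = cellkey d Fl"
  have fin: "finite (range key)" unfolding key_def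
    by (rule cellkey_finite[OF compact d]) (simp add: Fl F(2))
  define k where "k = card (range key)"
  have main: "\<exists>n0 n1 \<theta>0 \<theta>1 u. n0 + M * n1 = n \<and> n0 \<le> n1 \<and>
           point_eval n0 \<theta>0 \<and> point_eval n1 \<theta>1 \<and> perm_unitary n u \<and>
           (\<forall>a\<in>\<F>. opnorm (\<theta> a - mat_adjoint u * dsum (\<theta>0 a) (dsum_pow M (\<theta>1 a)) * u) < \<epsilon>)"
    if nL: "n > k * M * M + k * M" and pe: "point_eval n \<theta>" for n and \<theta> :: "('a \<Rightarrow> complex) \<Rightarrow> complex mat"
  proof -
    from pe obtain xs where xs: "length xs = n" and th: "\<And>f. f \<in> Cfun \<Longrightarrow> \<theta> f = mat_diag n (\<lambda>i. f (xs ! i))"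
      unfolding point_eval_def by auto
    have "\<exists>zs ws p. p permutes {..<length xs} \<and> length zs + M * length ws = length xs
     \<and> length zs \<le> length ws \<and> (\<forall>i<length xs. key ((zs @ concat (replicate M ws)) ! p i) = key (xs ! i))"
    proof (cases "M = 0")
      case True
      have "id permutes {..<length xs} \<and> length xs + M * length xs = length xs
        \<and> length xs \<le> length xs \<and> (\<forall>i<length xs. key ((xs @ concat (replicate M xs)) ! id i) = key (xs ! i))"
        using True by (simp add: permutes_id)
      then show ?thesis by (intro exI[of _ xs] exI[of _ xs] exI[of _ id])
    next
      case False
      then have "M \<ge> 1" by simp
      then show ?thesis using regroup[OF fin _ nL[unfolded k_def, folded xs]] by simp
    qed
    then obtain zs ws p where p: "p permutes {..<n}" and len: "length zs + M * length ws = n"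
      and le: "length zs \<le> length ws" and kp: "\<And>i. i < n \<Longrightarrow> key ((zs @ concat (replicate M ws)) ! p i) = key (xs ! i)"
      unfolding xs by (elim exE conjE) simp
    define ys where "ys = zs @ concat (replicate M ws)"
    define n0 where "n0 = length zs"
    define n1 where "n1 = length ws"
    define \<theta>0 where "\<theta>0 = (\<lambda>f::'a \<Rightarrow> complex. mat_diag n0 (\<lambda>i. f (zs ! i)))"
    define \<theta>1 where "\<theta>1 = (\<lambda>f::'a \<Rightarrow> complex. mat_diag n1 (\<lambda>i. f (ws ! i)))"
    define sg where "sg = Hilbert_Choice.inv p"
    define u where "u = mat n n (\<lambda>(i,j). if j = sg i then (1::complex) else 0)"
    have sg: "sg permutes {..<n}" unfolding sg_def by (rule permutes_inv[OF p])
    have isg: "Hilbert_Choice.inv sg = p" unfolding sg_def by (rule inv_inv_eq[OF permutes_bij[OF p]])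
    have pe0: "point_eval n0 \<theta>0" unfolding point_eval_def \<theta>0_def n0_def by auto
    have pe1: "point_eval n1 \<theta>1" unfolding point_eval_def \<theta>1_def n1_def by auto
    have pu: "perm_unitary n u" unfolding perm_unitary_def u_def using sg by auto
    have nsum: "n0 + M * n1 = n" unfolding n0_def n1_def using len .
    have bound: "opnorm (\<theta> a - mat_adjoint u * dsum (\<theta>0 a) (dsum_pow M (\<theta>1 a)) * u) < \<epsilon>"
      if a: "a \<in> \<F>" for a
    proof -
      have aC: "a \<in> Cfun" using a F(2) by auto
      have ds: "dsum (\<theta>0 a) (dsum_pow M (\<theta>1 a)) = mat_diag n (\<lambda>i. a (ys ! i))"
        unfolding \<theta>0_def \<theta>1_def dsum_pow_diag dsum_diag nsum
      proof (rule mat_diag_cong)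
        fix i assume i: "i < n"
        show "(if i < n0 then a (zs ! i) else a (ws ! ((i - n0) mod n1))) = a (ys ! i)"
        proof (cases "i < n0")
          case True then show ?thesis unfolding ys_def n0_def by (simp add: nth_append)
        next
          case False
          then have "i - n0 < M * length ws" using i nsum unfolding n1_def by linarith
          then show ?thesis using False unfolding ys_def n0_def n1_def
            by (simp add: nth_append concat_rep_nth)
        qed
      qed
      have cj: "mat_adjoint u * mat_diag n (\<lambda>i. a (ys ! i)) * u = mat_diag n (\<lambda>i. a (ys ! p i))"
        using perm_conj[OF sg u_def, of "\<lambda>i. a (ys ! i)"] unfolding isg .
      have eq: "\<theta> a - mat_adjoint u * dsum (\<theta>0 a) (dsum_pow M (\<theta>1 a)) * u
          = mat_diag n (\<lambda>i. a (xs ! i) - a (ys ! p i))"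
        unfolding ds cj th[OF aC] diag_sub ..
      have "opnorm (mat_diag n (\<lambda>i. a (xs ! i) - a (ys ! p i))) \<le> \<epsilon> / 2"
      proof (rule opnorm_diag)
        show "0 \<le> \<epsilon> / 2" using eps by simp
      next
        fix i assume i: "i < n"
        have "key (xs ! i) = key (ys ! p i)" using kp[OF i] unfolding ys_def by simp
        then have "cmod (a (xs ! i) - a (ys ! p i)) < 2 * d"
          unfolding key_def by (rule cellkey_close[OF d]) (simp add: Fl a)
        then show "cmod (a (xs ! i) - a (ys ! p i)) \<le> \<epsilon> / 2" unfolding d_def by simp
      qed
      then show ?thesis unfolding eq using eps by simp
    qed
    have "length zs \<le> length ws" by (rule le)
    then have le': "n0 \<le> n1" unfolding n0_def n1_def .
    show ?thesis
      apply (rule exI[of _ n0], rule exI[of _ n1], rule exI[of _ \<theta>0], rule exI[of _ \<theta>1], rule exI[of _ u])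
      using nsum le' pe0 pe1 pu bound by simp
  qed
  show ?thesis
  proof (rule exI[of _ "{}"], rule exI[of _ "k * M * M + k * M"], intro conjI allI impI)
    fix n \<theta>
    assume A: "k * M * M + k * M < n \<and> point_eval n \<theta> \<and> (\<forall>h\<in>{}. complex_of_real (\<Delta> h) < ntr (\<theta> h))"
    show "\<exists>n0 n1 \<theta>0 \<theta>1 u. n0 + M * n1 = n \<and> n0 \<le> n1 \<and>
           point_eval n0 \<theta>0 \<and> point_eval n1 \<theta>1 \<and> perm_unitary n u \<and>
           (\<forall>a\<in>\<F>. opnorm (\<theta> a - mat_adjoint u * dsum (\<theta>0 a) (dsum_pow M (\<theta>1 a)) * u) < \<epsilon>)"
      using main[of n \<theta>] A by simp
  qed auto
qed

end
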